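(* Let $\rho_{AB}$ be any two-qubit state, let $A_1,A_2,A_3$ be dichotomic ($\pm1$-valued) observables on the first qubit and $B_1,B_2,B_3$ dichotomic observables on the second qubit, and set $F_3=\frac{1}{\sqrt3}\big|\sum_{i=1}^3\mathrm{Tr}(\rho_{AB}\,A_i\otimes B_i)\big|$. Then $F_3\le 1/\eta_{opt}$, where $\eta_{opt}$ is the optimal (largest) unsharpness parameter $\eta\in[0,1]$ such that, for any three dichotomic qubit observables, their unsharp versions with parameter $\eta$ are jointly measurable.
   Context: For a dichotomic observable $A=P_+-P_-$ (with $P_\pm$ its spectral projections), its unsharp version with unsharpness parameter $\eta\in[0,1]$ is the two-outcome POVM with elements $A^{(\eta)}_{\pm}=\eta P_\pm+(1-\eta)\frac{I}{2}$, whose associated observable is $\eta A$ (for traceless $A$). A set of POVMs is jointly measurable if there is a single POVM from whose outcomes all of them are obtained as marginals. *)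

theory Defs
  imports "HOL-Analysis.Analysis" "HOL-Library.Numeral_Type"
begin

text \<open>Operators on a finite-dimensional Hilbert space C^'n, as 'n x 'n complex matrices.
  A qubit is 'n = 2; a two-qubit system is indexed by 2 \<times> 2.\<close>

type_synonym 'n op = "complex ^ 'n ^ 'n"

definition hermitian :: "'n::finite op \<Rightarrow> bool" where
  "hermitian A \<longleftrightarrow> (\<forall>i j. A $ i $ j = cnj (A $ j $ i))"

definition psd :: "'n::finite op \<Rightarrow> bool" where
  "psd A \<longleftrightarrow> hermitian A \<and>
     (\<forall>x :: complex ^ 'n. 0 \<le> Re (\<Sum>i\<in>UNIV. \<Sum>j\<in>UNIV. cnj (x $ i) * A $ i $ j * x $ j))"

definition trace :: "'n::finite op \<Rightarrow> complex" where
  "trace A = (\<Sum>i\<in>UNIV. A $ i $ i)"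

definition density :: "'n::finite op \<Rightarrow> bool" where
  "density \<rho> \<longleftrightarrow> psd \<rho> \<and> trace \<rho> = 1"

definition kron :: "'m::finite op \<Rightarrow> 'n::finite op \<Rightarrow> ('m \<times> 'n) op" where
  "kron A B = (\<chi> p q. A $ fst p $ fst q * B $ snd p $ snd q)"

text \<open>Dichotomic (\<plusminus>1-valued) observable: Hermitian with spectrum in {1,-1}, i.e. A^2 = I.\<close>
definition dichotomic :: "'n::finite op \<Rightarrow> bool" where
  "dichotomic A \<longleftrightarrow> hermitian A \<and> A ** A = mat 1"

definition spec_proj :: "'n::finite op \<Rightarrow> bool \<Rightarrow> 'n op" where
  "spec_proj A b = (1/2::real) *\<^sub>R (mat 1 + (if b then (1::real) else -1) *\<^sub>R A)"

definition unsharp :: "real \<Rightarrow> 'n::finite op \<Rightarrow> bool \<Rightarrow> 'n op" where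
  "unsharp \<eta> A b = \<eta> *\<^sub>R spec_proj A b + ((1 - \<eta>) / 2) *\<^sub>R mat 1"

definition povm :: "('o::finite \<Rightarrow> 'n::finite op) \<Rightarrow> bool" where
  "povm E \<longleftrightarrow> (\<forall>k. psd (E k)) \<and> (\<Sum>k\<in>UNIV. E k) = mat 1"

definition jointly_measurable :: "('i::finite \<Rightarrow> 'o::finite \<Rightarrow> 'n::finite op) \<Rightarrow> bool" where
  "jointly_measurable M \<longleftrightarrow>
     (\<exists>G :: ('i \<Rightarrow> 'o) \<Rightarrow> 'n op. povm G \<and>
        (\<forall>i k. (\<Sum>f\<in>{f. f i = k}. G f) = M i k))"

definition eta_opt :: real where
  "eta_opt = Sup {\<eta> \<in> {0..1}. \<forall>A :: 3 \<Rightarrow> 2 op. (\<forall>i. dichotomic (A i)) \<longrightarrow>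
                      jointly_measurable (\<lambda>i. unsharp \<eta> (A i))}"

end

theory Submission
  imports Defs
begin

definition tr2 :: "'n::finite op \<Rightarrow> 'n op \<Rightarrow> complex" where
  "tr2 P Q = (\<Sum>i\<in>UNIV. \<Sum>j\<in>UNIV. P$i$j * Q$j$i)"

lemma trace_mult: "trace (P ** Q) = tr2 P Q"
  by (simp add: trace_def tr2_def matrix_matrix_mult_def)

lemma quad_eq:
  fixes M :: "'n::finite op"
  assumes h: "hermitian M" and sq: "M ** M = c *\<^sub>R M"
  shows "(\<Sum>k\<in>UNIV. cnj ((\<Sum>i\<in>UNIV. M$k$i * x$i)) * (\<Sum>j\<in>UNIV. M$k$j * x$j))
       = of_real c * (\<Sum>i\<in>UNIV. \<Sum>j\<in>UNIV. cnj (x $ i) * M $ i $ j * x $ j)"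
proof -
  have e: "(\<Sum>k\<in>UNIV. M$i$k * M$k$j) = of_real c * M$i$j" for i j
  proof -
    have "(M ** M)$i$j = (c *\<^sub>R M)$i$j" using sq by simp
    thus ?thesis by (simp add: matrix_matrix_mult_def del: scaleR_conv_of_real) (simp add: scaleR_conv_of_real)
  qed
  have hc: "cnj (M$k$i) = M$i$k" for k i using h unfolding hermitian_def by (metis complex_cnj_cnj)
  have "(\<Sum>k\<in>UNIV. cnj ((\<Sum>i\<in>UNIV. M$k$i * x$i)) * (\<Sum>j\<in>UNIV. M$k$j * x$j))
     = (\<Sum>k\<in>UNIV. \<Sum>i\<in>UNIV. \<Sum>j\<in>UNIV. cnj (x$i) * (M$i$k * M$k$j) * x$j)"
    by (intro sum.cong refl) (simp add: sum_product hc mult_ac, subst sum.swap, simp add: mult_ac)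
  also have "\<dots> = (\<Sum>i\<in>UNIV. \<Sum>k\<in>UNIV. \<Sum>j\<in>UNIV. cnj (x$i) * (M$i$k * M$k$j) * x$j)"
    by (rule sum.swap)
  also have "\<dots> = (\<Sum>i\<in>UNIV. \<Sum>j\<in>UNIV. \<Sum>k\<in>UNIV. cnj (x$i) * (M$i$k * M$k$j) * x$j)"
    by (rule sum.cong[OF refl], rule sum.swap)
  also have "\<dots> = (\<Sum>i\<in>UNIV. \<Sum>j\<in>UNIV. cnj (x$i) * (\<Sum>k\<in>UNIV. M$i$k * M$k$j) * x$j)"
    by (simp add: sum_distrib_left sum_distrib_right)
  also have "\<dots> = of_real c * (\<Sum>i\<in>UNIV. \<Sum>j\<in>UNIV. cnj (x $ i) * M $ i $ j * x $ j)"
    by (simp add: e sum_distrib_left mult_ac)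
  finally show ?thesis .
qed

lemma quad_nonneg:
  fixes M :: "'n::finite op"
  assumes h: "hermitian M" and sq: "M ** M = c *\<^sub>R M" and c: "c > 0"
  shows "0 \<le> Re (\<Sum>i\<in>UNIV. \<Sum>j\<in>UNIV. cnj (x $ i) * M $ i $ j * x $ j)"
proof -
  let ?q = "(\<Sum>i\<in>UNIV. \<Sum>j\<in>UNIV. cnj (x $ i) * M $ i $ j * x $ j)"
  have nn: "0 \<le> Re (cnj z * z)" for z :: complex
    by (simp add: complex_mult_cnj[of z, unfolded mult.commute[of z]])
  have "0 \<le> Re (\<Sum>k\<in>UNIV. cnj ((\<Sum>i\<in>UNIV. M$k$i * x$i)) * (\<Sum>j\<in>UNIV. M$k$j * x$j))"
    by (subst Re_sum) (intro sum_nonneg nn)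
  also have "\<dots> = c * Re ?q" using quad_eq[OF h sq] by simp
  finally show ?thesis using c by (simp add: zero_le_mult_iff)
qed

lemma psd_of_sq:
  fixes M :: "'n::finite op"
  assumes h: "hermitian M" and sq: "M ** M = c *\<^sub>R M" and c: "c > 0"
  shows "psd M"
  using quad_nonneg[OF assms] h unfolding psd_def by blast

lemma tr_nonneg:
  fixes M P :: "'n::finite op"
  assumes P: "psd P" and h: "hermitian M" and sq: "M ** M = c *\<^sub>R M" and c: "c > 0"
  shows "0 \<le> Re (tr2 P M)"
proof -
  have e: "(\<Sum>k\<in>UNIV. M$j$k * M$k$i) = of_real c * M$j$i" for i j
  proof -
    have "(M ** M)$j$i = (c *\<^sub>R M)$j$i" using sq by simp
    thus ?thesis by (simp add: matrix_matrix_mult_def del: scaleR_conv_of_real) (simp add: scaleR_conv_of_real)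
  qed
  have hc: "cnj (M$i$k) = M$k$i" for k i using h unfolding hermitian_def by (metis complex_cnj_cnj)
  have pq: "\<forall>x. 0 \<le> Re (\<Sum>i\<in>UNIV. \<Sum>j\<in>UNIV. cnj (x $ i) * P $ i $ j * x $ j)"
    using P unfolding psd_def by blast
  have col: "0 \<le> Re (\<Sum>i\<in>UNIV. \<Sum>j\<in>UNIV. P $ i $ j * (M$j$k * M$k$i))" for k
  proof -
    have "0 \<le> Re (\<Sum>i\<in>UNIV. \<Sum>j\<in>UNIV. cnj ((\<chi> i. M$i$k) $ i) * P $ i $ j * (\<chi> i. M$i$k) $ j)"
      using pq by (rule spec)
    also have "(\<Sum>i\<in>UNIV. \<Sum>j\<in>UNIV. cnj ((\<chi> i. M$i$k) $ i) * P $ i $ j * (\<chi> i. M$i$k) $ j)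
       = (\<Sum>i\<in>UNIV. \<Sum>j\<in>UNIV. P $ i $ j * (M$j$k * M$k$i))"
      by (intro sum.cong refl) (simp add: hc)
    finally show ?thesis .
  qed
  have "0 \<le> Re (\<Sum>k\<in>UNIV. \<Sum>i\<in>UNIV. \<Sum>j\<in>UNIV. P $ i $ j * (M$j$k * M$k$i))"
    by (subst Re_sum) (intro sum_nonneg col)
  also have "(\<Sum>k\<in>UNIV. \<Sum>i\<in>UNIV. \<Sum>j\<in>UNIV. P $ i $ j * (M$j$k * M$k$i))
      = (\<Sum>i\<in>UNIV. \<Sum>j\<in>UNIV. P $ i $ j * (\<Sum>k\<in>UNIV. M$j$k * M$k$i))"
  proof -
    have "(\<Sum>k\<in>UNIV. \<Sum>i\<in>UNIV. \<Sum>j\<in>UNIV. P $ i $ j * (M$j$k * M$k$i))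
       = (\<Sum>i\<in>UNIV. \<Sum>k\<in>UNIV. \<Sum>j\<in>UNIV. P $ i $ j * (M$j$k * M$k$i))"
      by (rule sum.swap)
    also have "\<dots> = (\<Sum>i\<in>UNIV. \<Sum>j\<in>UNIV. \<Sum>k\<in>UNIV. P $ i $ j * (M$j$k * M$k$i))"
      by (rule sum.cong[OF refl], rule sum.swap)
    finally show ?thesis by (simp add: sum_distrib_left)
  qed
  also have "\<dots> = of_real c * tr2 P M" by (simp add: e tr2_def sum_distrib_left mult_ac)
  finally show ?thesis using c by (simp add: zero_le_mult_iff)
qed


subsection \<open>Matrix algebra\<close>

lemma madd_r: "(B + C) ** A = B ** A + C ** (A::'n::finite op)"
  by (vector matrix_matrix_mult_def sum.distrib[symmetric] field_simps)
lemma madd_l: "A ** (B + C) = A ** B + A ** (C::'n::finite op)"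
  by (rule matrix_add_ldistrib)
lemma mdiff_r: "(B - C) ** A = B ** A - C ** (A::'n::finite op)"
  by (vector matrix_matrix_mult_def sum_subtractf[symmetric] field_simps)
lemma mdiff_l: "A ** (B - C) = A ** B - A ** (C::'n::finite op)"
  by (vector matrix_matrix_mult_def sum_subtractf[symmetric] field_simps)
lemma mscale_l: "(a *\<^sub>R X) ** Y = a *\<^sub>R (X ** (Y::'n::finite op))"
  by (simp add: scalar_matrix_assoc)
lemma mscale_r: "X ** (a *\<^sub>R Y) = a *\<^sub>R (X ** (Y::'n::finite op))"
  by (simp add: matrix_scalar_ac scalar_matrix_assoc)

lemma herm_cnj: "hermitian A \<Longrightarrow> cnj (A$i$j) = A$j$i"
  unfolding hermitian_def by (metis complex_cnj_cnj)

lemma hermitianI: "(\<And>i j. cnj (A$i$j) = A$j$i) \<Longrightarrow> hermitian A"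
  unfolding hermitian_def by (metis complex_cnj_cnj)

lemma dich_sq:
  fixes U :: "'n::finite op"
  assumes d: "dichotomic U" and s: "s * s = (1::real)"
  shows "hermitian (mat 1 + s *\<^sub>R U)"
    and "(mat 1 + s *\<^sub>R U) ** (mat 1 + s *\<^sub>R U) = 2 *\<^sub>R (mat 1 + s *\<^sub>R U)"
proof -
  have hU: "hermitian U" and uu: "U ** U = mat 1" using d unfolding dichotomic_def by auto
  show "hermitian (mat 1 + s *\<^sub>R U)"
    by (rule hermitianI) (simp add: mat_def herm_cnj[OF hU] del: scaleR_conv_of_real)
  have ss: "s *\<^sub>R s *\<^sub>R (mat 1::'n op) = mat 1" using s by simp
  have "(mat 1 + s *\<^sub>R U) ** (mat 1 + s *\<^sub>R U) = (mat 1 + s *\<^sub>R U) + (s *\<^sub>R U + s *\<^sub>R s *\<^sub>R mat 1)"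
    by (simp only: madd_r madd_l matrix_mul_lid matrix_mul_rid mscale_l mscale_r uu scaleR_add_right)
  also have "\<dots> = (mat 1 + s *\<^sub>R U) + (mat 1 + s *\<^sub>R U)" by (simp only: ss add.commute)
  also have "\<dots> = 2 *\<^sub>R (mat 1 + s *\<^sub>R U)" by (rule scaleR_2[symmetric])
  finally show "(mat 1 + s *\<^sub>R U) ** (mat 1 + s *\<^sub>R U) = 2 *\<^sub>R (mat 1 + s *\<^sub>R U)" .
qed

lemma tr2_add2: "tr2 P (X + Y) = tr2 P X + tr2 P Y"
  by (simp add: tr2_def algebra_simps sum.distrib)
lemma tr2_diff2: "tr2 P (X - Y) = tr2 P X - tr2 P Y"
  by (simp add: tr2_def algebra_simps sum_subtractf)
lemma tr2_scale2: "tr2 P (a *\<^sub>R X) = of_real a * tr2 P X"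
  by (simp add: tr2_def sum_distrib_left del: scaleR_conv_of_real) (simp add: scaleR_conv_of_real mult_ac)
lemma tr2_scale1: "tr2 (a *\<^sub>R X) P = of_real a * tr2 X P"
  by (simp add: tr2_def sum_distrib_left del: scaleR_conv_of_real) (simp add: scaleR_conv_of_real mult_ac)
lemma tr2_mat1: "tr2 P (mat 1) = trace P"
  by (simp add: tr2_def trace_def mat_def if_distrib cong: if_cong)
lemma tr2_sum1: "tr2 (\<Sum>k\<in>S. X k) P = (\<Sum>k\<in>S. tr2 (X k) P)"
proof -
  have "tr2 (\<Sum>k\<in>S. X k) P = (\<Sum>i\<in>UNIV. \<Sum>j\<in>UNIV. \<Sum>k\<in>S. X k $ i $ j * P $ j $ i)"
    by (simp add: tr2_def sum_component sum_distrib_right)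
  also have "\<dots> = (\<Sum>i\<in>UNIV. \<Sum>k\<in>S. \<Sum>j\<in>UNIV. X k $ i $ j * P $ j $ i)"
    by (rule sum.cong[OF refl], rule sum.swap)
  also have "\<dots> = (\<Sum>k\<in>S. \<Sum>i\<in>UNIV. \<Sum>j\<in>UNIV. X k $ i $ j * P $ j $ i)"
    by (rule sum.swap)
  finally show ?thesis by (simp add: tr2_def)
qed
lemma tr2_sum2: "tr2 P (\<Sum>k\<in>S. X k) = (\<Sum>k\<in>S. tr2 P (X k))"
proof -
  have "tr2 P (\<Sum>k\<in>S. X k) = (\<Sum>i\<in>UNIV. \<Sum>j\<in>UNIV. \<Sum>k\<in>S. P $ i $ j * X k $ j $ i)"
    by (simp add: tr2_def sum_component sum_distrib_left)
  also have "\<dots> = (\<Sum>i\<in>UNIV. \<Sum>k\<in>S. \<Sum>j\<in>UNIV. P $ i $ j * X k $ j $ i)"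
    by (rule sum.cong[OF refl], rule sum.swap)
  also have "\<dots> = (\<Sum>k\<in>S. \<Sum>i\<in>UNIV. \<Sum>j\<in>UNIV. P $ i $ j * X k $ j $ i)"
    by (rule sum.swap)
  finally show ?thesis by (simp add: tr2_def)
qed

lemma tr2_herm_real:
  assumes "hermitian P" "hermitian Q"
  shows "Im (tr2 P Q) = 0"
proof -
  have "cnj (tr2 P Q) = (\<Sum>i\<in>UNIV. \<Sum>j\<in>UNIV. P$j$i * Q$i$j)"
    unfolding tr2_def by (simp add: cnj_sum herm_cnj[OF assms(1)] herm_cnj[OF assms(2)])
  also have "\<dots> = tr2 P Q" unfolding tr2_def by (rule sum.swap)
  finally show ?thesis by (metis Reals_cnj_iff complex_is_Real_iff)
qed

lemma tr_dich_bound: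
  fixes \<rho> U :: "'n::finite op"
  assumes r: "density \<rho>" and d: "dichotomic U"
  shows "\<bar>Re (tr2 \<rho> U)\<bar> \<le> 1" and "Im (tr2 \<rho> U) = 0"
proof -
  have P: "psd \<rho>" and t: "trace \<rho> = 1" using r unfolding density_def by auto
  have "0 \<le> Re (tr2 \<rho> (mat 1 + s *\<^sub>R U))" if "s * s = (1::real)" for s
    by (rule tr_nonneg[OF P dich_sq[OF d that]]) simp
  hence a: "0 \<le> 1 + s * Re (tr2 \<rho> U)" if "s * s = (1::real)" for s
    using that by (simp add: tr2_add2 tr2_scale2 tr2_mat1 t)
  from a[of 1] a[of "-1"] show "\<bar>Re (tr2 \<rho> U)\<bar> \<le> 1" by simp
  show "Im (tr2 \<rho> U) = 0"
    using P d unfolding psd_def dichotomic_def by (intro tr2_herm_real) auto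
qed

lemma sum_pair_univ: "(\<Sum>r\<in>(UNIV::('a::finite \<times> 'b::finite) set). F r) = (\<Sum>a\<in>UNIV. \<Sum>b\<in>UNIV. F (a,b))"
  using sum.cartesian_product[of "\<lambda>a b. F (a,b)" UNIV UNIV] by (simp add: UNIV_Times_UNIV)

lemma kron_dich:
  fixes A B :: "'n::finite op"
  assumes "dichotomic A" "dichotomic B"
  shows "dichotomic (kron A B)"
proof -
  have hA: "hermitian A" and aa: "A ** A = mat 1" and hB: "hermitian B" and bb: "B ** B = mat 1"
    using assms unfolding dichotomic_def by auto
  have ea: "(\<Sum>k\<in>UNIV. A$i$k * A$k$j) = (if i = j then 1 else 0)" for i j
    using arg_cong[OF aa, of "\<lambda>M. M$i$j"] by (simp add: matrix_matrix_mult_def mat_def)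
  have eb: "(\<Sum>k\<in>UNIV. B$i$k * B$k$j) = (if i = j then 1 else 0)" for i j
    using arg_cong[OF bb, of "\<lambda>M. M$i$j"] by (simp add: matrix_matrix_mult_def mat_def)
  have "hermitian (kron A B)"
    by (rule hermitianI) (simp add: kron_def herm_cnj[OF hA] herm_cnj[OF hB])
  moreover have "(kron A B ** kron A B) $ p $ q = mat 1 $ p $ q" for p q
  proof -
    have "(kron A B ** kron A B) $ p $ q
        = (\<Sum>r\<in>UNIV. A $ fst p $ fst r * B $ snd p $ snd r * (A $ fst r $ fst q * B $ snd r $ snd q))"
      by (simp add: matrix_matrix_mult_def kron_def)
    also have "\<dots> = (\<Sum>a\<in>UNIV. \<Sum>b\<in>UNIV. (A $ fst p $ a * A $ a $ fst q) * (B $ snd p $ b * B $ b $ snd q))"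
      by (simp add: sum_pair_univ mult_ac)
    also have "\<dots> = (\<Sum>a\<in>UNIV. A $ fst p $ a * A $ a $ fst q) * (\<Sum>b\<in>UNIV. B $ snd p $ b * B $ b $ snd q)"
      by (simp add: sum_product)
    also have "\<dots> = mat 1 $ p $ q" using ea eb by (simp add: mat_def prod_eq_iff)
    finally show "(kron A B ** kron A B) $ p $ q = mat 1 $ p $ q" .
  qed
  hence "kron A B ** kron A B = mat 1" by (simp add: vec_eq_iff)
  ultimately show ?thesis unfolding dichotomic_def by simp
qed


subsection \<open>Pauli matrices\<close>

definition sx :: "2 op" where "sx = (\<chi> i j. if i = j then 0 else 1)"
definition sy :: "2 op" where "sy = (\<chi> i j. if i = j then 0 else if i = 1 then - \<i> else \<i>)"
definition sz :: "2 op" where "sz = (\<chi> i j. if i = j then (if i = 1 then 1 else -1) else 0)"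
definition pauli :: "3 \<Rightarrow> 2 op" where "pauli k = (if k = 1 then sx else if k = 2 then sy else sz)"
definition sg :: "bool \<Rightarrow> real" where "sg b = (if b then 1 else -1)"

lemma pauli_dich: "dichotomic (pauli k)"
proof -
  have "k = 1 \<or> k = 2 \<or> k = 3" by (rule exhaust_3)
  thus ?thesis
    by (auto simp: dichotomic_def hermitian_def pauli_def sx_def sy_def sz_def vec_eq_iff forall_2
        sum_2 matrix_matrix_mult_def mat_def)
qed

lemma trace_mat1_2: "trace (mat 1 :: 2 op) = 2"
  by (simp add: trace_def sum_2 mat_def)

lemma tr2_pauli_self: "tr2 (pauli k) (pauli k) = 2"
  using pauli_dich[of k] by (simp add: trace_mult[symmetric] dichotomic_def trace_mat1_2)

lemma S_sq:
  fixes f :: "3 \<Rightarrow> bool"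
  shows "(\<Sum>i\<in>UNIV. sg (f i) *\<^sub>R pauli i) ** (\<Sum>i\<in>UNIV. sg (f i) *\<^sub>R pauli i) = 3 *\<^sub>R mat 1"
proof -
  have e: "(\<Sum>i\<in>UNIV. sg (f i) *\<^sub>R pauli i) = sg (f 1) *\<^sub>R sx + sg (f 2) *\<^sub>R sy + sg (f 3) *\<^sub>R sz"
    by (simp add: sum_3 pauli_def)
  show ?thesis unfolding e
    by (cases "f 1"; cases "f 2"; cases "f 3")
      (simp_all add: sg_def sx_def sy_def sz_def vec_eq_iff forall_2 sum_2 matrix_matrix_mult_def mat_def
        scaleR_conv_of_real algebra_simps)
qed

lemma lin3:
  fixes I S :: "'a::real_vector"
  assumes a: "a * a = 3"
  shows "a *\<^sub>R (a *\<^sub>R I - S) - (a *\<^sub>R S - 3 *\<^sub>R I) = (2 * a) *\<^sub>R (a *\<^sub>R I - S)"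
proof -
  have a6: "(2*a)*a = 6"
  proof -
    have "(2*a)*a = 2*(a*a)" by (simp only: mult.assoc)
    thus ?thesis using a by simp
  qed
  have "a *\<^sub>R (a *\<^sub>R I - S) - (a *\<^sub>R S - 3 *\<^sub>R I) = ((a*a) *\<^sub>R I + 3 *\<^sub>R I) - (a *\<^sub>R S + a *\<^sub>R S)"
    by (simp add: algebra_simps)
  also have "(a*a) *\<^sub>R I + 3 *\<^sub>R I = 6 *\<^sub>R I" using a by (simp add: scaleR_left_distrib[symmetric])
  also have "a *\<^sub>R S + a *\<^sub>R S = (2*a) *\<^sub>R S" by (simp add: scaleR_left_distrib[symmetric])
  also have "6 *\<^sub>R I - (2*a) *\<^sub>R S = (2 * a) *\<^sub>R (a *\<^sub>R I - S)"
    by (simp only: scaleR_diff_right scaleR_scaleR a6)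
  finally show ?thesis .
qed

lemma M_sq:
  fixes f :: "3 \<Rightarrow> bool"
  defines "S \<equiv> (\<Sum>i\<in>UNIV. sg (f i) *\<^sub>R pauli i)"
  shows "(sqrt 3 *\<^sub>R mat 1 - S) ** (sqrt 3 *\<^sub>R mat 1 - S) = (2 * sqrt 3) *\<^sub>R (sqrt 3 *\<^sub>R mat 1 - S)"
proof -
  have SS: "S ** S = 3 *\<^sub>R mat 1" unfolding S_def by (rule S_sq)
  have "(sqrt 3 *\<^sub>R mat 1 - S) ** (sqrt 3 *\<^sub>R mat 1 - S)
      = sqrt 3 *\<^sub>R (sqrt 3 *\<^sub>R mat 1 - S) - (sqrt 3 *\<^sub>R S - 3 *\<^sub>R mat 1)"
    by (simp only: mdiff_r mdiff_l mscale_l mscale_r matrix_mul_lid matrix_mul_rid SS)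
  also have "\<dots> = (2 * sqrt 3) *\<^sub>R (sqrt 3 *\<^sub>R mat 1 - S)" by (rule lin3) simp
  finally show ?thesis .
qed

lemma herm_pauli: "hermitian (pauli k)" using pauli_dich[of k] by (simp add: dichotomic_def)

lemma herm_M: "hermitian (sqrt 3 *\<^sub>R mat 1 - (\<Sum>i\<in>UNIV. sg (f i) *\<^sub>R pauli i))"
  by (rule hermitianI) (simp add: mat_def sum_component herm_cnj[OF herm_pauli] cnj_sum del: scaleR_conv_of_real)

lemma per_f:
  fixes G :: "2 op" and f :: "3 \<Rightarrow> bool"
  assumes "psd G"
  shows "Re (\<Sum>i\<in>UNIV. of_real (sg (f i)) * tr2 G (pauli i)) \<le> sqrt 3 * Re (trace G)"
proof -
  have "0 \<le> Re (tr2 G (sqrt 3 *\<^sub>R mat 1 - (\<Sum>i\<in>UNIV. sg (f i) *\<^sub>R pauli i)))"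
    by (rule tr_nonneg[OF assms herm_M M_sq]) simp
  thus ?thesis by (simp add: tr2_diff2 tr2_scale2 tr2_mat1 tr2_sum2)
qed


subsection \<open>Upper bound on eta\<close>

lemma trace_tr2: "trace P = tr2 P (mat 1)" by (simp add: tr2_mat1)

lemma unsharp_diff: "unsharp \<eta> X True - unsharp \<eta> X False = \<eta> *\<^sub>R X"
  by (simp add: vec_eq_iff unsharp_def spec_proj_def del: scaleR_conv_of_real)
     (simp add: scaleR_conv_of_real field_simps)

lemma eta_upper:
  assumes "jointly_measurable (\<lambda>i. unsharp \<eta> (pauli i))"
  shows "\<eta> \<le> 1 / sqrt 3"
proof -
  obtain G :: "(3 \<Rightarrow> bool) \<Rightarrow> 2 op" where pv: "povm G"
    and mg: "\<forall>i k. (\<Sum>f\<in>{f. f i = k}. G f) = unsharp \<eta> (pauli i) k"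
    using assms unfolding jointly_measurable_def by blast
  have psdG: "psd (G f)" for f using pv unfolding povm_def by blast
  have sumG: "(\<Sum>f\<in>UNIV. G f) = mat 1" using pv unfolding povm_def by blast
  have D: "(\<Sum>f\<in>UNIV. sg (f i) *\<^sub>R G f) = \<eta> *\<^sub>R pauli i" for i
  proof -
    have "(\<Sum>f\<in>UNIV. sg (f i) *\<^sub>R G f) = (\<Sum>f\<in>UNIV. if f i then G f else - G f)"
      by (rule sum.cong) (auto simp: sg_def)
    also have "\<dots> = (\<Sum>f\<in>{f. f i}. G f) + (\<Sum>f\<in>{f. \<not> f i}. - G f)"
      by (simp add: sum.If_cases Collect_neg_eq)
    also have "\<dots> = unsharp \<eta> (pauli i) True - unsharp \<eta> (pauli i) False"
      using mg[rule_format, of i True] mg[rule_format, of i False] by (simp add: sum_negf)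
    also have "\<dots> = \<eta> *\<^sub>R pauli i" by (rule unsharp_diff)
    finally show ?thesis .
  qed
  have T1: "(\<Sum>f\<in>UNIV. Re (\<Sum>i\<in>UNIV. of_real (sg (f i)) * tr2 (G f) (pauli i))) = 6 * \<eta>"
  proof -
    have "(\<Sum>f\<in>UNIV. Re (\<Sum>i\<in>UNIV. of_real (sg (f i)) * tr2 (G f) (pauli i)))
        = Re (\<Sum>f\<in>UNIV. \<Sum>i\<in>UNIV. of_real (sg (f i)) * tr2 (G f) (pauli i))"
      by (rule Re_sum[symmetric])
    also have "(\<Sum>f\<in>UNIV. \<Sum>i\<in>UNIV. of_real (sg (f i)) * tr2 (G f) (pauli i))
        = (\<Sum>i\<in>UNIV. \<Sum>f\<in>UNIV. of_real (sg (f i)) * tr2 (G f) (pauli i))"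
      by (rule sum.swap)
    also have "\<dots> = (\<Sum>i\<in>UNIV. tr2 (\<Sum>f\<in>UNIV. sg (f i) *\<^sub>R G f) (pauli i))"
      by (simp add: tr2_sum1 tr2_scale1)
    also have "\<dots> = (\<Sum>i\<in>(UNIV::3 set). of_real \<eta> * 2)"
      by (simp add: D tr2_scale1 tr2_pauli_self)
    finally show ?thesis by (simp add: sum_3)
  qed
  have T2: "(\<Sum>f\<in>UNIV. sqrt 3 * Re (trace (G f))) = sqrt 3 * 2"
  proof -
    have "(\<Sum>f\<in>UNIV. sqrt 3 * Re (trace (G f))) = sqrt 3 * Re (\<Sum>f\<in>UNIV. trace (G f))"
      by (simp add: sum_distrib_left Re_sum)
    also have "(\<Sum>f\<in>UNIV. trace (G f)) = trace (\<Sum>f\<in>UNIV. G f)"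
      by (simp add: trace_tr2 tr2_sum1)
    finally show ?thesis by (simp add: sumG trace_mat1_2)
  qed
  have "(\<Sum>f\<in>UNIV. Re (\<Sum>i\<in>UNIV. of_real (sg (f i)) * tr2 (G f) (pauli i)))
      \<le> (\<Sum>f\<in>UNIV. sqrt 3 * Re (trace (G f)))"
    by (rule sum_mono) (rule per_f[OF psdG])
  hence le: "6 * \<eta> \<le> sqrt 3 * 2" using T1 T2 by simp
  have s3: "sqrt 3 * sqrt 3 = (3::real)" by simp
  have pos: "0 < sqrt (3::real)" by simp
  have "\<eta> * sqrt 3 \<le> 1"
  proof -
    have "6 * \<eta> * sqrt 3 \<le> sqrt 3 * 2 * sqrt 3" using le by (rule mult_right_mono) simp
    hence "6 * (\<eta> * sqrt 3) \<le> 6" using s3 by (simp add: algebra_simps)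
    thus ?thesis by simp
  qed
  thus ?thesis using pos by (simp add: pos_le_divide_eq)
qed


subsection \<open>Lower bound on eta\<close>

lemma psd_zero: "psd (0 :: 'n::finite op)"
  unfolding psd_def hermitian_def by simp

lemma psd_add: assumes "psd X" "psd Y" shows "psd (X + Y)"
proof -
  have hX: "hermitian X" and hY: "hermitian Y" using assms unfolding psd_def by auto
  have "hermitian (X + Y)" by (rule hermitianI) (simp add: herm_cnj[OF hX] herm_cnj[OF hY])
  moreover have "0 \<le> Re (\<Sum>i\<in>UNIV. \<Sum>j\<in>UNIV. cnj (x $ i) * (X + Y) $ i $ j * x $ j)" for x
  proof -
    have "(\<Sum>i\<in>UNIV. \<Sum>j\<in>UNIV. cnj (x $ i) * (X + Y) $ i $ j * x $ j)
        = (\<Sum>i\<in>UNIV. \<Sum>j\<in>UNIV. cnj (x $ i) * X $ i $ j * x $ j)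
          + (\<Sum>i\<in>UNIV. \<Sum>j\<in>UNIV. cnj (x $ i) * Y $ i $ j * x $ j)"
      by (simp add: algebra_simps sum.distrib)
    thus ?thesis using assms unfolding psd_def by simp
  qed
  ultimately show ?thesis unfolding psd_def by blast
qed

lemma psd_scale: assumes "psd X" "0 \<le> c" shows "psd (c *\<^sub>R X)"
proof -
  have hX: "hermitian X" using assms unfolding psd_def by auto
  have "hermitian (c *\<^sub>R X)" by (rule hermitianI) (simp add: herm_cnj[OF hX] del: scaleR_conv_of_real)
  moreover have "0 \<le> Re (\<Sum>i\<in>UNIV. \<Sum>j\<in>UNIV. cnj (x $ i) * (c *\<^sub>R X) $ i $ j * x $ j)" for x
  proof -
    have "(\<Sum>i\<in>UNIV. \<Sum>j\<in>UNIV. cnj (x $ i) * (c *\<^sub>R X) $ i $ j * x $ j)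
        = of_real c * (\<Sum>i\<in>UNIV. \<Sum>j\<in>UNIV. cnj (x $ i) * X $ i $ j * x $ j)"
      by (simp add: sum_distrib_left del: scaleR_conv_of_real) (simp add: scaleR_conv_of_real mult_ac)
    thus ?thesis using assms unfolding psd_def by simp
  qed
  ultimately show ?thesis unfolding psd_def by blast
qed

lemma psd_sum: assumes "finite S" "\<And>k. psd (X k)" shows "psd (\<Sum>k\<in>S. X k)"
  using assms(1) by (induction S rule: finite_induct) (auto intro: psd_add psd_zero assms(2))

lemma spec_psd: assumes "dichotomic X" shows "psd (spec_proj X b)"
proof -
  have s: "sg b * sg b = 1" by (simp add: sg_def)
  have "psd (mat 1 + sg b *\<^sub>R X)" by (rule psd_of_sq[OF dich_sq[OF assms s]]) simp
  hence "psd ((1/2::real) *\<^sub>R (mat 1 + sg b *\<^sub>R X))" by (rule psd_scale) simp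
  thus ?thesis unfolding spec_proj_def sg_def by simp
qed

definition mk3 :: "bool \<Rightarrow> bool \<Rightarrow> bool \<Rightarrow> 3 \<Rightarrow> bool" where
  "mk3 a b c = (\<lambda>i. if i = 1 then a else if i = 2 then b else c)"

lemma sum_fun3:
  "(\<Sum>f\<in>(UNIV::(3\<Rightarrow>bool) set). g f) = (\<Sum>a\<in>UNIV. \<Sum>b\<in>UNIV. \<Sum>c\<in>UNIV. g (mk3 a b c))"
proof -
  have e: "mk3 (f 1) (f 2) (f 3) = f" for f :: "3 \<Rightarrow> bool"
  proof
    fix i :: 3
    show "mk3 (f 1) (f 2) (f 3) i = f i" using exhaust_3[of i] by (auto simp: mk3_def)
  qed
  have "(\<Sum>f\<in>(UNIV::(3\<Rightarrow>bool) set). g f)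
      = (\<Sum>t\<in>(UNIV::(bool\<times>bool\<times>bool) set). g (mk3 (fst t) (fst (snd t)) (snd (snd t))))"
    by (rule sum.reindex_bij_witness[where i="\<lambda>t. mk3 (fst t) (fst (snd t)) (snd (snd t))"
          and j="\<lambda>f. (f 1, f 2, f 3)"]) (auto simp: e, auto simp: mk3_def)
  also have "\<dots> = (\<Sum>a\<in>UNIV. \<Sum>b\<in>UNIV. \<Sum>c\<in>UNIV. g (mk3 a b c))" by (simp add: sum_pair_univ)
  finally show ?thesis .
qed

lemma spec_entry: "spec_proj X b $ i $ j = (mat 1 $ i $ j + of_real (sg b) * X $ i $ j) / 2"
  by (simp add: spec_proj_def sg_def del: scaleR_conv_of_real) (simp add: scaleR_conv_of_real field_simps)

lemma unsharp_entry: "unsharp \<eta> X b $ i $ j = of_real \<eta> * spec_proj X b $ i $ j + of_real ((1 - \<eta>) / 2) * mat 1 $ i $ j"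
  by (simp add: unsharp_def del: scaleR_conv_of_real) (simp add: scaleR_conv_of_real)

lemma cnt0: "(\<Sum>f\<in>(UNIV::(3\<Rightarrow>bool) set). if f i = k then (1::complex) else 0) = 4"
  using exhaust_3[of i] by (cases k) (auto simp: sum_fun3 mk3_def UNIV_bool)

lemma cnt1: "(\<Sum>f\<in>(UNIV::(3\<Rightarrow>bool) set). if f i = k then complex_of_real (sg (f j)) else 0)
    = (if j = i then 4 * complex_of_real (sg k) else 0)"
  using exhaust_3[of i] exhaust_3[of j] by (cases k) (auto simp: sum_fun3 mk3_def UNIV_bool sg_def)

lemma cnt0': "(\<Sum>f\<in>(UNIV::(3\<Rightarrow>bool) set). (1::complex)) = 8"
  by (simp only: sum_fun3) (simp add: UNIV_bool)

lemma cnt1': "(\<Sum>f\<in>(UNIV::(3\<Rightarrow>bool) set). complex_of_real (sg (f j))) = 0"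
  using exhaust_3[of j] by (auto simp: sum_fun3 mk3_def UNIV_bool sg_def)

lemma eta_lower:
  fixes A :: "3 \<Rightarrow> 2 op"
  assumes d: "\<forall>i. dichotomic (A i)"
  shows "jointly_measurable (\<lambda>i. unsharp (1/3) (A i))"
proof -
  define G :: "(3 \<Rightarrow> bool) \<Rightarrow> 2 op" where
    "G f = (1/12::real) *\<^sub>R (\<Sum>j\<in>UNIV. spec_proj (A j) (f j))" for f
  have Ge: "G f $ p $ q = (\<Sum>j\<in>UNIV. (mat 1 $ p $ q + of_real (sg (f j)) * A j $ p $ q) / 24)" for f p q
  proof -
    have "G f $ p $ q = (1/12) * (\<Sum>j\<in>UNIV. spec_proj (A j) (f j) $ p $ q)"
      by (simp add: G_def sum_component del: scaleR_conv_of_real) (simp add: scaleR_conv_of_real)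
    thus ?thesis by (simp add: spec_entry sum_distrib_left)
  qed
  have psdG: "psd (G f)" for f
    unfolding G_def using d by (intro psd_scale psd_sum spec_psd) auto
  have sumG: "(\<Sum>f\<in>UNIV. G f) = mat 1"
  proof -
    have "(\<Sum>f\<in>UNIV. G f $ p $ q) = mat 1 $ p $ q" for p q
    proof -
      have "(\<Sum>f\<in>UNIV. G f $ p $ q)
          = (\<Sum>j\<in>UNIV. \<Sum>f\<in>UNIV. (mat 1 $ p $ q + of_real (sg (f j)) * A j $ p $ q) / 24)"
        unfolding Ge by (rule sum.swap)
      also have "\<dots> = (\<Sum>j\<in>(UNIV::3 set). ((\<Sum>f\<in>(UNIV::(3\<Rightarrow>bool) set). (1::complex)) * mat 1 $ p $ q
             + (\<Sum>f\<in>UNIV. of_real (sg (f j))) * A j $ p $ q) / 24)"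
        by (simp add: sum.distrib sum_divide_distrib[symmetric] sum_distrib_right[symmetric] add_divide_distrib)
      also have "\<dots> = mat 1 $ p $ q" by (simp only: cnt0' cnt1') (simp add: sum_3)
      finally show ?thesis .
    qed
    thus ?thesis by (simp add: vec_eq_iff sum_component)
  qed
  have margG: "(\<Sum>f\<in>{f. f i = k}. G f) = unsharp (1/3) (A i) k" for i k
  proof -
    have "(\<Sum>f\<in>{f. f i = k}. G f) = (\<Sum>f\<in>UNIV. if f i = k then G f else 0)"
      by (simp add: sum.If_cases)
    moreover have "(\<Sum>f\<in>UNIV. if f i = k then G f else 0) $ p $ q = unsharp (1/3) (A i) k $ p $ q" for p q
    proof -
      have "(\<Sum>f\<in>UNIV. if f i = k then G f else 0) $ p $ q
          = (\<Sum>f\<in>UNIV. \<Sum>j\<in>UNIV. (if f i = k then (1::complex) else 0) * mat 1 $ p $ q / 24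
               + (if f i = k then of_real (sg (f j)) else 0) * A j $ p $ q / 24)"
      proof -
        have "(\<Sum>f\<in>UNIV. if f i = k then G f else 0) $ p $ q = (\<Sum>f\<in>UNIV. if f i = k then G f $ p $ q else 0)"
          by (auto simp: sum_component intro!: sum.cong)
        also have "\<dots> = (\<Sum>f\<in>UNIV. \<Sum>j\<in>UNIV. (if f i = k then (1::complex) else 0) * mat 1 $ p $ q / 24
               + (if f i = k then of_real (sg (f j)) else 0) * A j $ p $ q / 24)"
          by (rule sum.cong[OF refl]) (simp add: Ge add_divide_distrib)
        finally show ?thesis .
      qed
      also have "\<dots> = (\<Sum>j\<in>UNIV. \<Sum>f\<in>UNIV. (if f i = k then (1::complex) else 0) * mat 1 $ p $ q / 24
               + (if f i = k then of_real (sg (f j)) else 0) * A j $ p $ q / 24)"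
        by (rule sum.swap)
      also have "\<dots> = (\<Sum>j\<in>(UNIV::3 set). (\<Sum>f\<in>UNIV. if f i = k then (1::complex) else 0) * mat 1 $ p $ q / 24
               + (\<Sum>f\<in>UNIV. if f i = k then of_real (sg (f j)) else 0) * A j $ p $ q / 24)"
        by (simp only: sum.distrib sum_divide_distrib[symmetric] sum_distrib_right[symmetric])
      also have "\<dots> = (\<Sum>j\<in>(UNIV::3 set). 4 * mat 1 $ p $ q / 24
               + (if j = i then 4 * complex_of_real (sg k) else 0) * A j $ p $ q / 24)"
        by (simp only: cnt0 cnt1)
      also have "\<dots> = 12 * mat 1 $ p $ q / 24 + 4 * complex_of_real (sg k) * A i $ p $ q / 24"
        using exhaust_3[of i] by (auto simp: sum_3 field_simps)
      also have "\<dots> = unsharp (1/3) (A i) k $ p $ q"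
        by (simp add: unsharp_entry spec_entry field_simps)
      finally show ?thesis .
    qed
    ultimately show ?thesis by (simp add: vec_eq_iff)
  qed
  show ?thesis unfolding jointly_measurable_def povm_def using psdG sumG margG by blast
qed


lemma eta_opt_bounds: "1/3 \<le> eta_opt" "eta_opt \<le> 1 / sqrt 3"
proof -
  let ?S = "{\<eta> \<in> {0..1}. \<forall>A :: 3 \<Rightarrow> 2 op. (\<forall>i. dichotomic (A i)) \<longrightarrow>
                      jointly_measurable (\<lambda>i. unsharp \<eta> (A i))}"
  have mem: "1/3 \<in> ?S" using eta_lower by auto
  have bdd: "bdd_above ?S" by (rule bdd_aboveI[of _ 1]) auto
  show "1/3 \<le> eta_opt" unfolding eta_opt_def by (rule cSup_upper[OF mem bdd])
  have up: "\<eta> \<le> 1 / sqrt 3" if "\<eta> \<in> ?S" for \<eta>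
  proof -
    have "\<forall>i. dichotomic (pauli i)" by (simp add: pauli_dich)
    hence "jointly_measurable (\<lambda>i. unsharp \<eta> (pauli i))" using that by blast
    thus ?thesis by (rule eta_upper)
  qed
  show "eta_opt \<le> 1 / sqrt 3" unfolding eta_opt_def
  proof (rule cSup_least)
    show "?S \<noteq> {}" using mem by blast
  next
    fix x assume "x \<in> ?S" thus "x \<le> 1 / sqrt 3" by (rule up)
  qed
qed

theorem theorem3:
  fixes \<rho> :: "(2 \<times> 2) op" and A B :: "3 \<Rightarrow> 2 op"
  assumes "density \<rho>"
    and "\<forall>i. dichotomic (A i)" and "\<forall>i. dichotomic (B i)"
  shows "(1 / sqrt 3) * cmod (\<Sum>i\<in>UNIV. trace (\<rho> ** kron (A i) (B i))) \<le> 1 / eta_opt"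
proof -
  let ?t = "\<lambda>i. tr2 \<rho> (kron (A i) (B i))"
  have dk: "dichotomic (kron (A i) (B i))" for i using assms(2,3) by (intro kron_dich) auto
  have im: "Im (?t i) = 0" for i by (rule tr_dich_bound(2)[OF assms(1) dk])
  have re: "\<bar>Re (?t i)\<bar> \<le> 1" for i by (rule tr_dich_bound(1)[OF assms(1) dk])
  have "cmod (\<Sum>i\<in>UNIV. trace (\<rho> ** kron (A i) (B i))) = cmod (\<Sum>i\<in>UNIV. ?t i)"
    by (simp add: trace_mult)
  also have "\<dots> = \<bar>Re (\<Sum>i\<in>UNIV. ?t i)\<bar>" by (rule cmod_eq_Re) (simp add: Im_sum im)
  also have "\<dots> = \<bar>\<Sum>i\<in>UNIV. Re (?t i)\<bar>" by (simp add: Re_sum)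
  also have "\<dots> \<le> (\<Sum>i\<in>UNIV. \<bar>Re (?t i)\<bar>)" by (rule sum_abs)
  also have "\<dots> \<le> (\<Sum>i\<in>(UNIV::3 set). 1)" by (rule sum_mono) (rule re)
  also have "\<dots> = 3" by simp
  finally have c3: "cmod (\<Sum>i\<in>UNIV. trace (\<rho> ** kron (A i) (B i))) \<le> 3" .
  have pos: "0 < sqrt (3::real)" by simp
  have s3: "sqrt 3 * sqrt 3 = (3::real)" by simp
  have "(1 / sqrt 3) * cmod (\<Sum>i\<in>UNIV. trace (\<rho> ** kron (A i) (B i))) \<le> (1 / sqrt 3) * 3"
    using c3 pos by (intro mult_left_mono) auto
  also have "(1 / sqrt 3) * 3 = sqrt (3::real)" using s3 pos by (simp add: field_simps)
  also have "sqrt 3 \<le> 1 / eta_opt"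
  proof -
    have e0: "0 < eta_opt" using eta_opt_bounds(1) by simp
    have "eta_opt * sqrt 3 \<le> 1" using eta_opt_bounds(2) pos by (simp add: pos_le_divide_eq)
    thus ?thesis using e0 by (simp add: pos_le_divide_eq mult.commute)
  qed
  finally show ?thesis .
qed

end
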